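(* Consider the (1+1) EA maximizing $\mathrm{LeadingOnes}$ on $\{0,1\}^n$, and let $V_t$ be the $\mathrm{LeadingOnes}$ value of its current search point after $t$ iterations. Then for all $t\le\frac{e-1}{2}n^2-n^{3/2}\log n$, \[ \mathbb{E}[V_t]\ \ge\ \frac{2t}{en}-O(1). \]
   Context: $\mathrm{LeadingOnes}(x)=\sum_{i=1}^n\prod_{j=1}^i x_j$ for $x\in\{0,1\}^n$. The (1+1) EA maximizing $f\colon\{0,1\}^n\to\mathbb{R}$: choose $x\in\{0,1\}^n$ uniformly at random; then repeatedly (one iteration) create $y$ from $x$ by flipping each bit independently with probability $1/n$, and replace $x$ by $y$ if $f(y)\ge f(x)$; the algorithm stops once the optimum is reached (the search point then stays at the optimum). The $O(1)$ term is a constant independent of $n$ and $t$. *)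

theory Defs
  imports "HOL-Probability.Probability"
begin

text \<open>Search points in {0,1}^n are represented as bool lists of length n
  (True = bit 1). x_j is the j-th entry, i.e. xs ! (j-1).\<close>

definition LeadingOnes :: "bool list \<Rightarrow> nat" where
  "LeadingOnes xs = (\<Sum>i=1..length xs. \<Prod>j=1..i. (if xs ! (j - 1) then 1 else 0))"

fun mutate :: "real \<Rightarrow> bool list \<Rightarrow> bool list pmf" where
  "mutate p [] = return_pmf []"
| "mutate p (b # bs) =
     bind_pmf (bernoulli_pmf p) (\<lambda>f. bind_pmf (mutate p bs) (\<lambda>ys. return_pmf ((b \<noteq> f) # ys)))"

definition ea_step :: "nat \<Rightarrow> bool list \<Rightarrow> bool list pmf" where
  "ea_step n x =
     (if LeadingOnes x = n then return_pmf x
      else bind_pmf (mutate (1 / real n) x)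
             (\<lambda>y. return_pmf (if LeadingOnes y \<ge> LeadingOnes x then y else x)))"

fun ea_state :: "nat \<Rightarrow> nat \<Rightarrow> bool list pmf" where
  "ea_state n 0 = pmf_of_set {xs. length xs = n}"
| "ea_state n (Suc t) = bind_pmf (ea_state n t) (ea_step n)"

definition expected_LO :: "nat \<Rightarrow> nat \<Rightarrow> real" where
  "expected_LO n t = measure_pmf.expectation (ea_state n t) (\<lambda>x. real (LeadingOnes x))"

end

theory Submission
  imports Defs
begin


lemma LO_Nil[simp]: "LeadingOnes [] = 0"
  by (simp add: LeadingOnes_def)

lemma prod_shift: "(\<Prod>j=1..Suc k. f j) = f 1 * (\<Prod>j=1..k. f (Suc j))" for f :: "nat \<Rightarrow> nat"
proof -
  have "(\<Prod>j=1..Suc k. f j) = f 1 * (\<Prod>j=Suc 1..Suc k. f j)"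
    by (rule prod.atLeast_Suc_atMost) simp
  also have "(\<Prod>j=Suc 1..Suc k. f j) = (\<Prod>j=1..k. f (Suc j))"
    by (rule prod.shift_bounds_cl_Suc_ivl)
  finally show ?thesis .
qed

lemma LO_Cons[simp]: "LeadingOnes (b # xs) = (if b then Suc (LeadingOnes xs) else 0)"
proof -
  let ?f = "\<lambda>j. if (b # xs) ! (j - 1) then 1 else (0::nat)"
  have "LeadingOnes (b # xs) = (\<Sum>i=1..Suc (length xs). \<Prod>j=1..i. ?f j)"
    by (simp add: LeadingOnes_def)
  also have "\<dots> = (\<Prod>j=1..1. ?f j) + (\<Sum>i=Suc 1..Suc (length xs). \<Prod>j=1..i. ?f j)"
    by (rule sum.atLeast_Suc_atMost) simp
  also have "(\<Sum>i=Suc 1..Suc (length xs). \<Prod>j=1..i. ?f j) = (\<Sum>i=1..length xs. \<Prod>j=1..Suc i. ?f j)"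
    by (rule sum.shift_bounds_cl_Suc_ivl)
  also have "\<dots> = (\<Sum>i=1..length xs. ?f 1 * (\<Prod>j=1..i. if xs ! (j - 1) then 1 else 0))"
    by (intro sum.cong refl, subst prod_shift) (simp add: Suc_diff_Suc)
  finally show ?thesis by (auto simp: LeadingOnes_def sum_distrib_left[symmetric])
qed

lemma LO_le: "LeadingOnes xs \<le> length xs"
  by (induction xs) auto

lemma LO_rep[simp]: "LeadingOnes (replicate i True @ ys) = i + LeadingOnes ys"
  by (induction i) auto

lemma LO_prefix: "length a = i \<Longrightarrow> (i \<le> LeadingOnes (a @ ys)) \<longleftrightarrow> a = replicate i True"
proof (induction a arbitrary: i)
  case Nil then show ?case by simp
next
  case (Cons x a)
  then show ?case by (cases i) auto
qed



fun coins :: "nat \<Rightarrow> bool list pmf" where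
  "coins 0 = return_pmf []"
| "coins (Suc m) = bind_pmf (bernoulli_pmf (1/2)) (\<lambda>b. map_pmf (\<lambda>u. b # u) (coins m))"

lemma mutate_append:
  "mutate p (xs @ ys) = bind_pmf (mutate p xs) (\<lambda>a. map_pmf (\<lambda>b. a @ b) (mutate p ys))"
proof (induction xs)
  case Nil then show ?case by (simp add: bind_return_pmf bind_return_pmf' map_pmf_def)
next
  case (Cons x xs)
  show ?case
    by (simp add: Cons bind_assoc_pmf bind_return_pmf map_pmf_def)
qed

lemma set_mutate: "ys \<in> set_pmf (mutate p xs) \<Longrightarrow> length ys = length xs"
  by (induction xs arbitrary: ys) auto

lemma bernoulli_one: "bernoulli_pmf 1 = return_pmf True"
  by (rule pmf_eqI) (simp add: pmf_return split: split_indicator)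

lemma mutate_same:
  assumes "0 \<le> p" "p \<le> 1"
  shows "map_pmf (\<lambda>a. a = xs) (mutate p xs) = bernoulli_pmf ((1 - p) ^ length xs)"
proof (induction xs)
  case Nil then show ?case by (simp add: bernoulli_one)
next
  case (Cons x xs)
  have "map_pmf (\<lambda>a. a = x # xs) (mutate p (x # xs))
     = bind_pmf (bernoulli_pmf p) (\<lambda>f. map_pmf (\<lambda>ys. \<not> f \<and> ys = xs) (mutate p xs))"
    by (simp add: map_pmf_def bind_assoc_pmf bind_return_pmf) (auto intro!: bind_pmf_cong)
  also have "\<dots> = bind_pmf (bernoulli_pmf p) (\<lambda>f. if f then return_pmf False else bernoulli_pmf ((1 - p) ^ length xs))"
    by (intro bind_pmf_cong refl) (auto simp: Cons[symmetric] map_pmf_def)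
  also have "\<dots> = bernoulli_pmf ((1 - p) ^ length (x # xs))"
  proof (rule pmf_eqI)
    fix b :: bool
    have q: "0 \<le> (1 - p) ^ length xs" "(1 - p) ^ length xs \<le> 1"
      using assms by (auto intro: power_le_one)
    have q2: "0 \<le> (1 - p) * (1 - p) ^ length xs" "(1 - p) * (1 - p) ^ length xs \<le> 1"
      using assms q by (auto intro: mult_le_one)
    show "pmf (bind_pmf (bernoulli_pmf p) (\<lambda>f. if f then return_pmf False else bernoulli_pmf ((1 - p) ^ length xs))) b
      = pmf (bernoulli_pmf ((1 - p) ^ length (x # xs))) b"
      using assms q q2 by (cases b) (auto simp: pmf_bind algebra_simps)
  qed
  finally show ?case .
qed

lemma xor_coin:
  assumes "0 \<le> p" "p \<le> 1"
  shows "bind_pmf (bernoulli_pmf (1/2)) (\<lambda>b. bind_pmf (bernoulli_pmf p) (\<lambda>f. return_pmf (b \<noteq> f))) = bernoulli_pmf (1/2)"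
proof (rule pmf_eqI)
  fix c :: bool
  show "pmf (bind_pmf (bernoulli_pmf (1/2)) (\<lambda>b. bind_pmf (bernoulli_pmf p) (\<lambda>f. return_pmf (b \<noteq> f)))) c = pmf (bernoulli_pmf (1/2)) c"
    using assms by (cases c) (auto simp: pmf_bind field_simps)
qed

lemma coins_mutate:
  assumes "0 \<le> p" "p \<le> 1"
  shows "bind_pmf (coins m) (mutate p) = coins m"
proof (induction m)
  case 0 then show ?case by (simp add: bind_return_pmf)
next
  case (Suc m)
  have "bind_pmf (coins (Suc m)) (mutate p)
     = bind_pmf (bernoulli_pmf (1/2)) (\<lambda>b. bind_pmf (bernoulli_pmf p) (\<lambda>f.
          bind_pmf (bind_pmf (coins m) (mutate p)) (\<lambda>ys. return_pmf ((b \<noteq> f) # ys))))"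
  proof -
    have "bind_pmf (coins (Suc m)) (mutate p) = bind_pmf (bernoulli_pmf (1/2)) (\<lambda>x. bind_pmf (coins m) (\<lambda>y. bind_pmf (bernoulli_pmf p)
               (\<lambda>f. bind_pmf (mutate p y) (\<lambda>ys. return_pmf ((x \<noteq> f) # ys)))))"
      by (simp add: map_pmf_def bind_assoc_pmf bind_return_pmf)
    also have "\<dots> = bind_pmf (bernoulli_pmf (1/2)) (\<lambda>x. bind_pmf (bernoulli_pmf p) (\<lambda>f. bind_pmf (coins m) (\<lambda>y. 
               bind_pmf (mutate p y) (\<lambda>ys. return_pmf ((x \<noteq> f) # ys)))))"
      by (rule bind_pmf_cong[OF refl], rule bind_commute_pmf)
    finally show ?thesis by (simp add: bind_assoc_pmf)
  qed
  also have "\<dots> = bind_pmf (bernoulli_pmf (1/2)) (\<lambda>b. bind_pmf (bernoulli_pmf p) (\<lambda>f.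
          bind_pmf (return_pmf (b \<noteq> f)) (\<lambda>c. map_pmf (\<lambda>ys. c # ys) (coins m))))"
    by (simp add: Suc bind_return_pmf map_pmf_def)
  also have "\<dots> = bind_pmf (bind_pmf (bernoulli_pmf (1/2)) (\<lambda>b. bind_pmf (bernoulli_pmf p) (\<lambda>f. return_pmf (b \<noteq> f))))
                     (\<lambda>c. map_pmf (\<lambda>ys. c # ys) (coins m))"
    by (simp add: bind_assoc_pmf)
  also have "\<dots> = coins (Suc m)"
    by (subst xor_coin[OF assms]) simp
  finally show ?case .
qed

lemma pmf_coins: "pmf (coins m) xs = (if length xs = m then 1 / 2 ^ m else 0)"
proof (induction m arbitrary: xs)
  case 0 then show ?case by (auto simp: pmf_return)
next
  case (Suc m)
  have inj: "inj ((#) b)" for b :: bool by (auto simp: inj_def)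
  show ?case
  proof (cases xs)
    case Nil
    have "pmf (map_pmf ((#) b) M) [] = 0" for b :: bool and M by (auto simp: pmf_eq_0_set_pmf)
    then show ?thesis using Nil by (auto simp: pmf_bind)
  next
    case (Cons y ys)
    have "pmf (map_pmf ((#) b) (coins m)) (y # ys) = (if b = y then pmf (coins m) ys else 0)" for b
    proof (cases "b = y")
      case True then show ?thesis using pmf_map_inj'[OF inj] by simp
    next
      case False then show ?thesis by (auto intro!: pmf_map_outside)
    qed
    then show ?thesis using Cons Suc by (cases y) (auto simp: pmf_bind)
  qed
qed

lemma coins_uniform: "coins m = pmf_of_set {xs. length xs = m}"
proof (rule pmf_eqI)
  fix xs :: "bool list"
  have c: "card {xs :: bool list. length xs = m} = 2 ^ m"
    using card_lists_length_eq[of "UNIV :: bool set" m] by (simp add: card_UNIV_bool)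
  have f: "finite {xs :: bool list. length xs = m}"
    using finite_lists_length_eq[of "UNIV :: bool set" m] by simp
  have ne: "{xs :: bool list. length xs = m} \<noteq> {}"
    by (auto intro: exI[of _ "replicate m True"])
  show "pmf (coins m) xs = pmf (pmf_of_set {xs. length xs = m}) xs"
    using f ne by (simp add: pmf_coins c)
qed



lemma LO_replicate[simp]: "LeadingOnes (replicate n True) = n"
  by (induction n) auto

lemma rep_Suc_app: "x # (replicate j x @ u) = replicate j x @ x # u"
  by (induction j) auto

fun lvl :: "nat \<Rightarrow> nat \<Rightarrow> nat pmf" where
  "lvl j 0 = return_pmf j"
| "lvl j (Suc m) = bind_pmf (bernoulli_pmf (1/2)) (\<lambda>b. if b then lvl (Suc j) m else return_pmf j)"

definition Dn :: "nat \<Rightarrow> nat \<Rightarrow> bool list pmf" where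
  "Dn n i = (if i < n then map_pmf (\<lambda>u. replicate i True @ False # u) (coins (n - i - 1))
             else return_pmf (replicate n True))"

definition Qn :: "nat \<Rightarrow> nat \<Rightarrow> nat pmf" where
  "Qn n i = (if i < n then bind_pmf (bernoulli_pmf ((1 - 1 / real n) ^ i)) (\<lambda>ok. if ok then
               bind_pmf (bernoulli_pmf (1 / real n)) (\<lambda>f. if f then lvl (Suc i) (n - i - 1) else return_pmf i)
             else return_pmf i) else return_pmf n)"

fun LvChain :: "nat \<Rightarrow> nat \<Rightarrow> nat pmf" where
  "LvChain n 0 = lvl 0 n"
| "LvChain n (Suc t) = bind_pmf (LvChain n t) (Qn n)"

lemma lvl_D: "j + m = n \<Longrightarrow> bind_pmf (lvl j m) (Dn n) = map_pmf (\<lambda>u. replicate j True @ u) (coins m)"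
proof (induction m arbitrary: j)
  case 0 then show ?case by (simp add: bind_return_pmf Dn_def)
next
  case (Suc m)
  have jn: "j < n" "n - j - 1 = m" using Suc.prems by auto
  have "bind_pmf (lvl j (Suc m)) (Dn n) = bind_pmf (bernoulli_pmf (1/2)) (\<lambda>b. if b then bind_pmf (lvl (Suc j) m) (Dn n) else Dn n j)"
    by (auto simp: bind_assoc_pmf bind_return_pmf intro!: bind_pmf_cong)
  also have "\<dots> = bind_pmf (bernoulli_pmf (1/2)) (\<lambda>b. map_pmf (\<lambda>u. replicate j True @ b # u) (coins m))"
  proof -
    have A: "bind_pmf (lvl (Suc j) m) (Dn n) = map_pmf (\<lambda>u. replicate j True @ True # u) (coins m)"
      using Suc.IH[of "Suc j"] Suc.prems by (simp add: rep_Suc_app)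
    have B: "Dn n j = map_pmf (\<lambda>u. replicate j True @ False # u) (coins m)" using jn by (simp add: Dn_def)
    show ?thesis by (intro bind_pmf_cong refl) (auto simp: A B)
  qed
  also have "\<dots> = map_pmf (\<lambda>u. replicate j True @ u) (coins (Suc m))"
    by (simp add: map_bind_pmf map_pmf_comp)
  finally show ?case .
qed

lemma step_lump:
  assumes "1 \<le> n" "i \<le> n"
  shows "bind_pmf (Dn n i) (ea_step n) = bind_pmf (Qn n i) (Dn n)"
proof (cases "i < n")
  case False
  then have "i = n" using assms by auto
  then show ?thesis by (simp add: Dn_def Qn_def ea_step_def bind_return_pmf)
next
  case True
  define m where "m = n - i - 1"
  define p where "p = 1 / real n"
  have p: "0 \<le> p" "p \<le> 1" using assms by (auto simp: p_def)
  define R where "R = replicate i True"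
  have nim: "n - Suc i = m" by (simp add: m_def)
  have DI: "Dn n i = map_pmf (\<lambda>u. R @ False # u) (coins m)"
    using True by (simp add: Dn_def m_def R_def)
  have LOx: "LeadingOnes (R @ False # u) = i" for u by (simp add: R_def)
  have "bind_pmf (Dn n i) (ea_step n) = bind_pmf (coins m) (\<lambda>u. bind_pmf (mutate p R) (\<lambda>a.
           bind_pmf (bernoulli_pmf p) (\<lambda>f. bind_pmf (mutate p u) (\<lambda>u'.
             return_pmf (if i \<le> LeadingOnes (a @ f # u') then a @ f # u' else R @ False # u)))))"
    unfolding DI ea_step_def using True
    by (simp add: LOx map_pmf_def bind_assoc_pmf bind_return_pmf mutate_append p_def)
  also have "\<dots> = bind_pmf (coins m) (\<lambda>u. bind_pmf (mutate p R) (\<lambda>a. if a = R then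
           bind_pmf (bernoulli_pmf p) (\<lambda>f. map_pmf (\<lambda>u'. R @ f # u') (mutate p u))
           else return_pmf (R @ False # u)))"
  proof (intro bind_pmf_cong refl)
    fix u a assume "a \<in> set_pmf (mutate p R)"
    then have la: "length a = i" using set_mutate by (fastforce simp: R_def)
    show "bind_pmf (bernoulli_pmf p) (\<lambda>f. bind_pmf (mutate p u) (\<lambda>u'.
             return_pmf (if i \<le> LeadingOnes (a @ f # u') then a @ f # u' else R @ False # u))) =
          (if a = R then bind_pmf (bernoulli_pmf p) (\<lambda>f. map_pmf (\<lambda>u'. R @ f # u') (mutate p u))
           else return_pmf (R @ False # u))"
      using LO_prefix[OF la] by (auto simp: R_def map_pmf_def bind_return_pmf bind_return_pmf')
  qed
  also have "\<dots> = bind_pmf (mutate p R) (\<lambda>a. bind_pmf (coins m) (\<lambda>u. if a = R then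
           bind_pmf (bernoulli_pmf p) (\<lambda>f. map_pmf (\<lambda>u'. R @ f # u') (mutate p u))
           else return_pmf (R @ False # u)))"
    by (rule bind_commute_pmf)
  also have "\<dots> = bind_pmf (mutate p R) (\<lambda>a. if a = R then
           bind_pmf (bernoulli_pmf p) (\<lambda>f. map_pmf (\<lambda>u. R @ f # u) (coins m)) else Dn n i)"
  proof (intro bind_pmf_cong refl)
    fix a
    have "bind_pmf (coins m) (\<lambda>u. bind_pmf (bernoulli_pmf p) (\<lambda>f. map_pmf (\<lambda>u'. R @ f # u') (mutate p u)))
        = bind_pmf (bernoulli_pmf p) (\<lambda>f. bind_pmf (coins m) (\<lambda>u. map_pmf (\<lambda>u'. R @ f # u') (mutate p u)))"
      by (rule bind_commute_pmf)
    also have "\<dots> = bind_pmf (bernoulli_pmf p) (\<lambda>f. map_pmf (\<lambda>u. R @ f # u) (bind_pmf (coins m) (mutate p)))"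
      by (simp add: map_bind_pmf)
    also have "\<dots> = bind_pmf (bernoulli_pmf p) (\<lambda>f. map_pmf (\<lambda>u. R @ f # u) (coins m))"
      by (simp add: coins_mutate[OF p])
    finally show "bind_pmf (coins m) (\<lambda>u. if a = R then
           bind_pmf (bernoulli_pmf p) (\<lambda>f. map_pmf (\<lambda>u'. R @ f # u') (mutate p u))
           else return_pmf (R @ False # u)) = (if a = R then
           bind_pmf (bernoulli_pmf p) (\<lambda>f. map_pmf (\<lambda>u. R @ f # u) (coins m)) else Dn n i)"
      by (simp add: DI map_pmf_def)
  qed
  also have "\<dots> = bind_pmf (map_pmf (\<lambda>a. a = R) (mutate p R)) (\<lambda>ok. if ok then
           bind_pmf (bernoulli_pmf p) (\<lambda>f. map_pmf (\<lambda>u. R @ f # u) (coins m)) else Dn n i)"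
    by (simp add: bind_map_pmf)
  also have "\<dots> = bind_pmf (bernoulli_pmf ((1 - p) ^ i)) (\<lambda>ok. if ok then
           bind_pmf (bernoulli_pmf p) (\<lambda>f. if f then bind_pmf (lvl (Suc i) m) (Dn n) else Dn n i) else Dn n i)"
  proof -
    have "map_pmf (\<lambda>a. a = R) (mutate p R) = bernoulli_pmf ((1 - p) ^ i)"
      using mutate_same[OF p, of R] by (simp add: R_def)
    moreover have "map_pmf (\<lambda>u. R @ f # u) (coins m) = (if f then bind_pmf (lvl (Suc i) m) (Dn n) else Dn n i)" for f
      using lvl_D[of "Suc i" m n] True by (auto simp: DI m_def R_def rep_Suc_app)
    ultimately show ?thesis by (simp only:)
  qed
  also have "\<dots> = bind_pmf (Qn n i) (Dn n)"
    using True by (auto simp: Qn_def p_def m_def bind_assoc_pmf bind_return_pmf intro!: bind_pmf_cong)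
  finally show ?thesis .
qed



lemma set_lvl: "set_pmf (lvl j m) \<subseteq> {j..j+m}"
proof (induction m arbitrary: j)
  case 0 then show ?case by simp
next
  case (Suc m)
  have "set_pmf (lvl (Suc j) m) \<subseteq> {j..j + Suc m}" using Suc[of "Suc j"] by auto
  then show ?case by (auto split: if_splits)
qed

lemma set_Qn: "i \<le> n \<Longrightarrow> set_pmf (Qn n i) \<subseteq> {i..n}"
proof (cases "i < n")
  case True
  have "set_pmf (Qn n i) \<subseteq> {i} \<union> set_pmf (lvl (Suc i) (n - i - 1))"
    unfolding Qn_def using True by (auto split: if_splits)
  moreover have "set_pmf (lvl (Suc i) (n - i - 1)) \<subseteq> {i..n}"
    using set_lvl[of "Suc i" "n - i - 1"] True by auto
  ultimately show ?thesis using True by auto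
next
  case False
  assume "i \<le> n"
  then show ?thesis using False unfolding Qn_def by auto
qed

lemma set_Ln: "set_pmf (LvChain n t) \<subseteq> {..n}"
proof (induction t)
  case 0 then show ?case using set_lvl[of 0 n] by auto
next
  case (Suc t)
  show ?case
  proof
    fix x assume "x \<in> set_pmf (LvChain n (Suc t))"
    then obtain i where i: "i \<in> set_pmf (LvChain n t)" "x \<in> set_pmf (Qn n i)" by auto
    then have "i \<le> n" using Suc.IH by auto
    then show "x \<in> {..n}" using set_Qn[of i n] i(2) by auto
  qed
qed

lemma ea_state_lump:
  assumes "1 \<le> n"
  shows "ea_state n t = bind_pmf (LvChain n t) (Dn n)"
proof (induction t)
  case 0
  have "ea_state n 0 = coins n" by (simp add: coins_uniform)
  also have "\<dots> = bind_pmf (lvl 0 n) (Dn n)" using lvl_D[of 0 n n] by simp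
  finally show ?case by simp
next
  case (Suc t)
  have "ea_state n (Suc t) = bind_pmf (LvChain n t) (\<lambda>i. bind_pmf (Dn n i) (ea_step n))"
    by (simp add: Suc bind_assoc_pmf)
  also have "\<dots> = bind_pmf (LvChain n t) (\<lambda>i. bind_pmf (Qn n i) (Dn n))"
    using set_Ln[of n t] step_lump[OF assms] by (intro bind_pmf_cong refl) auto
  also have "\<dots> = bind_pmf (LvChain n (Suc t)) (Dn n)" by (simp add: bind_assoc_pmf)
  finally show ?case .
qed

lemma map_LO_D: "i \<le> n \<Longrightarrow> map_pmf LeadingOnes (Dn n i) = return_pmf i"
  by (auto simp: Dn_def map_pmf_comp o_def map_pmf_const)

lemma expected_LO_Ln:
  assumes "1 \<le> n"
  shows "expected_LO n t = measure_pmf.expectation (LvChain n t) real"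
proof -
  have "map_pmf LeadingOnes (ea_state n t) = LvChain n t"
  proof -
    have "map_pmf LeadingOnes (ea_state n t) = bind_pmf (LvChain n t) (\<lambda>i. map_pmf LeadingOnes (Dn n i))"
      by (simp add: ea_state_lump[OF assms] map_bind_pmf)
    also have "\<dots> = bind_pmf (LvChain n t) return_pmf"
      using set_Ln[of n t] map_LO_D by (intro bind_pmf_cong refl) auto
    finally show ?thesis by (simp add: bind_return_pmf')
  qed
  then show ?thesis unfolding expected_LO_def
    using integral_map_pmf[where f="\<lambda>x. real x" and g=LeadingOnes and p="ea_state n t"] by simp
qed



abbreviation EE :: "'a pmf \<Rightarrow> ('a \<Rightarrow> real) \<Rightarrow> real" where
  "EE M f \<equiv> measure_pmf.expectation M f"

lemma E_fin: "finite A \<Longrightarrow> set_pmf M \<subseteq> A \<Longrightarrow> EE M f = (\<Sum>a\<in>A. pmf M a * f a)"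
  by (subst integral_measure_pmf[of A]) (auto simp: mult.commute)

lemma E_bind_fin:
  assumes "finite A" "set_pmf M \<subseteq> A" "\<And>x. x \<in> A \<Longrightarrow> finite (set_pmf (K x))"
  shows "EE (bind_pmf M K) f = (\<Sum>a\<in>A. pmf M a * EE (K a) f)"
  using pmf_expectation_bind[of A K M f] assms by simp

lemma E_bern_bind:
  assumes "0 \<le> q" "q \<le> 1" "\<And>b. finite (set_pmf (K b))"
  shows "EE (bind_pmf (bernoulli_pmf q) K) f = q * EE (K True) f + (1 - q) * EE (K False) f"
proof -
  have "EE (bind_pmf (bernoulli_pmf q) K) f = (\<Sum>a\<in>UNIV. pmf (bernoulli_pmf q) a * EE (K a) f)"
    by (rule E_bind_fin) (auto simp: assms)
  also have "\<dots> = q * EE (K True) f + (1 - q) * EE (K False) f"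
    using assms by (simp add: UNIV_bool)
  finally show ?thesis .
qed

lemma finite_lvl: "finite (set_pmf (lvl j m))"
  using set_lvl[of j m] by (rule finite_subset) simp

lemma E_lvl_Suc: "EE (lvl j (Suc m)) f = EE (lvl (Suc j) m) f / 2 + f j / 2"
  by (simp add: E_bern_bind finite_lvl)

lemma E_Q:
  assumes "i < n"
  shows "EE (Qn n i) f = f i + (1 - 1 / real n) ^ i * (1 / real n) * (EE (lvl (Suc i) (n - i - 1)) f - f i)"
proof -
  have n: "1 \<le> real n" using assms by simp
  have a0: "0 \<le> 1 - 1 / real n" "1 - 1 / real n \<le> 1" using n by auto
  have a: "0 \<le> (1 - 1 / real n) ^ i" "(1 - 1 / real n) ^ i \<le> 1"
    using a0 by (auto intro!: power_le_one)
  have p: "0 \<le> 1 / real n" "1 / real n \<le> 1" using n by auto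
  show ?thesis
    unfolding Qn_def using assms a p
    by (simp add: E_bern_bind finite_lvl algebra_simps)
qed

lemma E_Q_top: "EE (Qn n n) f = f n"
  by (simp add: Qn_def)

lemma E_lvl_lin: "EE (lvl j m) real = real j + 1 - (1/2) ^ m"
proof (induction m arbitrary: j)
  case 0 then show ?case by simp
next
  case (Suc m)
  have "EE (lvl j (Suc m)) real = EE (lvl (Suc j) m) real / 2 + real j / 2" by (rule E_lvl_Suc)
  also have "\<dots> = real j + 1 - (1/2) ^ Suc m" using Suc[of "Suc j"] by (simp add: field_simps)
  finally show ?case .
qed

lemma E_lvl_geo:
  assumes "1 \<le> q" "q < 2"
  shows "EE (lvl j m) (\<lambda>k. q ^ k) \<le> q ^ j / (2 - q)"
proof (induction m arbitrary: j)
  case 0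
  have "q ^ j * 1 \<le> q ^ j / (2 - q)" using assms
    by (simp add: field_simps)
  then show ?case by simp
next
  case (Suc m)
  have "EE (lvl j (Suc m)) (\<lambda>k. q ^ k) = EE (lvl (Suc j) m) (\<lambda>k. q ^ k) / 2 + q ^ j / 2"
    by (rule E_lvl_Suc)
  also have "\<dots> \<le> (q ^ Suc j / (2 - q)) / 2 + q ^ j / 2"
    using Suc[of "Suc j"] by (intro add_right_mono divide_right_mono) auto
  also have "\<dots> = q ^ j / (2 - q)" using assms by (simp add: field_simps)
  finally show ?case .
qed

lemma E_lvl_F:
  fixes r :: real
  assumes "0 \<le> r" "r < 2"
  shows "EE (lvl j m) (\<lambda>k. \<Sum>l<k. r ^ l) \<le> (\<Sum>l<j. r ^ l) + r ^ j / (2 - r)"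
proof (induction m arbitrary: j)
  case 0
  then show ?case using assms by simp
next
  case (Suc m)
  have "EE (lvl j (Suc m)) (\<lambda>k. \<Sum>l<k. r ^ l) = EE (lvl (Suc j) m) (\<lambda>k. \<Sum>l<k. r ^ l) / 2 + (\<Sum>l<j. r ^ l) / 2"
    by (rule E_lvl_Suc)
  also have "\<dots> \<le> ((\<Sum>l<Suc j. r ^ l) + r ^ Suc j / (2 - r)) / 2 + (\<Sum>l<j. r ^ l) / 2"
    using Suc[of "Suc j"] by (intro add_right_mono divide_right_mono) auto
  also have "\<dots> = (\<Sum>l<j. r ^ l) + r ^ j / (2 - r)" using assms by (simp add: field_simps)
  finally show ?case .
qed



lemma X1: "0 \<le> (y::real) \<Longrightarrow> exp y \<le> 1 + y * exp y"
proof -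
  assume "0 \<le> y"
  have "1 - y \<le> exp (- y)" using exp_ge_add_one_self[of "-y"] by simp
  then have "(1 - y) * exp y \<le> exp (-y) * exp y" by (intro mult_right_mono) auto
  then show ?thesis by (simp add: exp_minus field_simps)
qed

lemma X2: "0 \<le> (y::real) \<Longrightarrow> exp y \<le> 1 + y + y\<^sup>2 * exp y"
proof -
  assume y: "0 \<le> y"
  have a: "exp y - 1 \<le> y * exp y" using X1[OF y] by simp
  have "exp y - 1 - y \<le> y * (exp y - 1)" using a by (simp add: algebra_simps)
  also have "\<dots> \<le> y * (y * exp y)" using a y by (intro mult_left_mono) auto
  finally show ?thesis by (simp add: power2_eq_square algebra_simps)
qed

lemma X3: "0 \<le> (z::real) \<Longrightarrow> z\<^sup>2 \<le> 2 * exp z"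
  using exp_lower_Taylor_quadratic[of z] by (simp add: field_simps)

lemma exp_le_inv: "0 \<le> (x::real) \<Longrightarrow> x < 1 \<Longrightarrow> exp x \<le> 1 / (1 - x)"
proof -
  assume x: "0 \<le> x" "x < 1"
  have "1 - x \<le> exp (- x)" using exp_ge_add_one_self[of "-x"] by simp
  then have "(1 - x) * exp x \<le> 1" by (simp add: exp_minus field_simps)
  then show ?thesis using x by (simp add: field_simps)
qed

lemma exp_3_10: "exp (3/10 :: real) \<le> 10/7"
  using exp_le_inv[of "3/10"] by simp

lemma exp_3_20: "exp (3/20 :: real) \<le> 10/7"
  using exp_le_inv[of "3/20"] by simp

lemma pointwise:
  fixes \<mu> d :: real and i k :: nat
  assumes mu: "0 \<le> \<mu>" "\<mu> \<le> 1/20" and d: "0 \<le> d" "d \<le> 3 * (real k - real i)" and ik: "i \<le> k"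
  shows "exp (\<mu> * d) \<le> 1 + \<mu> * d + 800 * \<mu>\<^sup>2 * ((10/7) ^ k / (10/7) ^ i)"
proof -
  have md: "0 \<le> \<mu> * d" using mu d by simp
  have "(\<mu> * d)\<^sup>2 * exp (\<mu> * d) \<le> 800 * \<mu>\<^sup>2 * exp (d / 10)"
  proof -
    have "d\<^sup>2 = 400 * (d/20)\<^sup>2" by (simp add: power2_eq_square)
    also have "\<dots> \<le> 400 * (2 * exp (d/20))" using X3[of "d/20"] d by simp
    finally have d2: "d\<^sup>2 \<le> 800 * exp (d/20)" by simp
    have "\<mu> * d \<le> d / 20" using mult_right_mono[OF mu(2) d(1)] by simp
    then have e: "exp (\<mu> * d) \<le> exp (d/20)" by simp
    have "(\<mu> * d)\<^sup>2 * exp (\<mu> * d) = \<mu>\<^sup>2 * (d\<^sup>2 * exp (\<mu> * d))" by (simp add: power_mult_distrib)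
    also have "\<dots> \<le> \<mu>\<^sup>2 * (800 * exp (d/20) * exp (d/20))"
      using d2 e by (intro mult_left_mono mult_mono) auto
    also have "\<mu>\<^sup>2 * (800 * exp (d/20) * exp (d/20)) = 800 * \<mu>\<^sup>2 * exp (d/20 + d/20)"
      by (simp only: exp_add mult.assoc mult.left_commute)
    also have "d/20 + d/20 = d/10" by simp
    finally show ?thesis .
  qed
  moreover have "exp (d / 10) \<le> (10/7) ^ k / (10/7) ^ i"
  proof -
    have "exp (d/10) \<le> exp (real (k - i) * (3/10))" using d ik by (simp add: of_nat_diff)
    also have "\<dots> = exp (3/10) ^ (k - i)" by (rule exp_of_nat_mult)
    also have "\<dots> \<le> (10/7) ^ (k - i)" using exp_3_10 by (intro power_mono) auto
    also have "\<dots> = (10/7) ^ k / (10/7) ^ i" using ik by (simp add: power_diff)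
    finally show ?thesis .
  qed
  ultimately have "(\<mu> * d)\<^sup>2 * exp (\<mu> * d) \<le> 800 * \<mu>\<^sup>2 * ((10/7) ^ k / (10/7) ^ i)"
    by (smt (verit) mult_left_mono zero_le_power2)
  then show ?thesis using X2[OF md] by linarith
qed



definition rr :: "nat \<Rightarrow> real" where "rr n = real n / (real n - 1)"
definition FF :: "nat \<Rightarrow> nat \<Rightarrow> real" where "FF n k = (\<Sum>l<k. rr n ^ l)"

lemma rr_eq: "2 \<le> n \<Longrightarrow> rr n = 1 + 1 / (real n - 1)"
  by (simp add: rr_def field_simps)

lemma rr_bounds: "3 \<le> n \<Longrightarrow> 1 < rr n \<and> rr n \<le> 3/2"
  by (simp add: rr_def field_simps)

lemma two_minus_rr: "3 \<le> n \<Longrightarrow> 2 - rr n = (real n - 2) / (real n - 1)"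
  by (simp add: rr_def field_simps)

lemma rr_pow_le_e: assumes "3 \<le> n" "l \<le> n - 1" shows "rr n ^ l \<le> exp 1"
proof -
  have n: "real n - 1 > 0" using assms by simp
  have "rr n \<le> exp (1 / (real n - 1))" using rr_eq[of n] assms exp_ge_add_one_self[of "1 / (real n - 1)"] by simp
  then have "rr n ^ l \<le> exp (1 / (real n - 1)) ^ l" using rr_bounds[of n] assms by (intro power_mono) auto
  also have "\<dots> = exp (real l * (1 / (real n - 1)))" by (rule exp_of_nat_mult[symmetric])
  also have "\<dots> \<le> exp 1"
  proof -
    have "real l \<le> real n - 1" using assms by (simp add: of_nat_diff)
    then have "real l * (1 / (real n - 1)) \<le> 1" using n by (simp add: field_simps)
    then show ?thesis by simp
  qed
  finally show ?thesis .
qed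

lemma rr_pow_ge_e: assumes "3 \<le> n" shows "exp 1 \<le> rr n ^ n"
proof -
  have n: "real n > 1" using assms by simp
  have "1 - 1 / real n \<le> exp (- (1 / real n))" using exp_ge_add_one_self[of "- (1 / real n)"] by simp
  then have "exp (1 / real n) \<le> 1 / (1 - 1 / real n)"
    using n by (simp add: exp_minus field_simps)
  also have "\<dots> = rr n" using n by (simp add: rr_def field_simps)
  finally have "exp (1 / real n) \<le> rr n" .
  then have "exp (1 / real n) ^ n \<le> rr n ^ n" by (intro power_mono) auto
  moreover have "exp (1 / real n) ^ n = exp 1"
    using n by (simp flip: exp_of_nat_mult)
  ultimately show ?thesis by simp
qed

lemma FF_n: assumes "3 \<le> n" shows "(real n - 1) * (exp 1 - 1) \<le> FF n n"
proof -
  have r: "rr n \<noteq> 1" using rr_bounds[OF assms] by simp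
  have "FF n n = (rr n ^ n - 1) / (rr n - 1)" unfolding FF_def by (rule geometric_sum[OF r])
  also have "rr n - 1 = 1 / (real n - 1)" using rr_eq[of n] assms by simp
  finally have "FF n n = (real n - 1) * (rr n ^ n - 1)" by simp
  then show ?thesis using rr_pow_ge_e[OF assms] assms by (simp add: mult_left_mono)
qed

lemma FF_nonneg: "3 \<le> n \<Longrightarrow> 0 \<le> FF n k"
  using rr_bounds[of n] unfolding FF_def by (intro sum_nonneg) auto

lemma FF_Suc: "FF n (Suc k) = FF n k + rr n ^ k"
  by (simp add: FF_def)

lemma FF_mono: assumes "3 \<le> n" "i \<le> k" shows "FF n i \<le> FF n k"
  using assms(2)
proof (induction k)
  case 0 then show ?case by simp
next
  case (Suc k)
  show ?case
  proof (cases "i = Suc k")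
    case False
    then have "FF n i \<le> FF n k" using Suc by auto
    moreover have "0 \<le> rr n ^ k" using rr_bounds[OF assms(1)] by simp
    ultimately show ?thesis by (simp add: FF_Suc)
  qed simp
qed

lemma FF_diff: assumes "3 \<le> n" "i \<le> k" "k \<le> n" shows "FF n k - FF n i \<le> 3 * (real k - real i)"
  using assms(2,3)
proof (induction k)
  case 0 then show ?case by simp
next
  case (Suc k)
  show ?case
  proof (cases "i = Suc k")
    case False
    then have "FF n k - FF n i \<le> 3 * (real k - real i)" using Suc by auto
    moreover have "rr n ^ k \<le> 3"
    proof -
      have "k \<le> n - 1" using Suc.prems by simp
      then show ?thesis using rr_pow_le_e[OF assms(1), of k] exp_le by simp
    qed
    ultimately show ?thesis by (simp add: FF_Suc)
  qed simp
qed

lemma FF_le: assumes "3 \<le> n" "k \<le> n" shows "FF n k \<le> 3 * real k"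
  using FF_diff[OF assms(1) _ assms(2), of 0] by (simp add: FF_def)

lemma a_pow: assumes "3 \<le> n" shows "(1 - 1 / real n) ^ i = 1 / rr n ^ i"
  using assms by (simp add: rr_def field_simps power_divide)

lemma a_pow_ge: assumes "3 \<le> n" "i < n" shows "exp (-1) \<le> (1 - 1 / real n) ^ i"
proof -
  have "rr n ^ i \<le> exp 1" using rr_pow_le_e[OF assms(1), of i] assms by simp
  moreover have "0 < rr n ^ i" using rr_bounds[OF assms(1)] by simp
  ultimately have "1 / exp 1 \<le> 1 / rr n ^ i" by (intro divide_left_mono) auto
  then show ?thesis using a_pow[OF assms(1)] by (simp add: exp_minus inverse_eq_divide)
qed



lemma E_mono: "finite (set_pmf M) \<Longrightarrow> (\<And>x. x \<in> set_pmf M \<Longrightarrow> f x \<le> g x) \<Longrightarrow> EE M f \<le> EE M g"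
  by (simp add: E_fin[of "set_pmf M"] sum_mono mult_left_mono)

lemma E_lin: "finite (set_pmf M) \<Longrightarrow> EE M (\<lambda>x. a + b * f x + c * g x) = a + b * EE M f + c * EE M g"
proof -
  assume f: "finite (set_pmf M)"
  have s: "(\<Sum>y\<in>set_pmf M. a * pmf M y) = a"
    using sum_pmf_eq_1[OF f, of M] by (simp flip: sum_distrib_left)
  show ?thesis using f s
    by (simp add: E_fin[of "set_pmf M"] sum.distrib sum_distrib_left algebra_simps)
qed

definition hh :: "nat \<Rightarrow> nat \<Rightarrow> real" where "hh n i = 2 / real n * (1/2) ^ (n - i)"

lemma drift1:
  assumes n: "3 \<le> n" and i: "i \<le> n"
  shows "real i + 2 / (exp 1 * real n) - hh n i \<le> EE (Qn n i) real"
proof (cases "i < n")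
  case False
  then have "i = n" using i by simp
  moreover have "2 / (exp 1 * real n) \<le> 2 / real n"
    using n by (intro divide_left_mono) (auto simp: mult_le_cancel_right1 order.trans[OF _ exp_ge_add_one_self])
  ultimately show ?thesis by (simp add: E_Q_top hh_def)
next
  case True
  define A where "A = (1 - 1 / real n) ^ i"
  define x :: real where "x = (1/2) ^ (n - i)"
  have A: "exp (-1) \<le> A" "A \<le> 1" using a_pow_ge[OF n True] n
    by (auto simp: A_def intro!: power_le_one)
  have x: "0 \<le> x" "x \<le> 1/2"
  proof -
    show "0 \<le> x" by (simp add: x_def)
    have "(1/2::real) ^ (n - i) \<le> (1/2) ^ 1" using True by (intro power_decreasing) auto
    then show "x \<le> 1/2" by (simp add: x_def)
  qed
  have m: "(1/2::real) ^ (n - Suc i) = 2 * x"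
  proof -
    have "n - i = Suc (n - Suc i)" using True by simp
    then have "x = (1/2) * (1/2) ^ (n - Suc i)" unfolding x_def by (metis power_Suc)
    then show ?thesis by simp
  qed
  have "EE (Qn n i) real = real i + A * (1 / real n) * (2 - 2 * x)"
    using E_Q[OF True, of real] E_lvl_lin[of "Suc i" "n - i - 1"] by (simp add: A_def m)
  moreover have "2 / (exp 1 * real n) - hh n i \<le> A * (1 / real n) * (2 - 2 * x)"
  proof -
    have "A * (1 / real n) * (2 - 2 * x) = 2 * A / real n - 2 * A * x / real n" by (simp add: diff_divide_distrib algebra_simps)
    moreover have "2 / (exp 1 * real n) \<le> 2 * A / real n"
      using A(1) n by (simp add: exp_minus field_simps)
    moreover have "2 * A * x / real n \<le> 2 * x / real n"
    proof -
      have "A * x \<le> x" using mult_right_mono[OF A(2) x(1)] by simp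
      then show ?thesis using n by (intro divide_right_mono) auto
    qed
    moreover have "hh n i = 2 * x / real n" by (simp add: hh_def x_def)
    ultimately show ?thesis by (smt (verit))
  qed
  ultimately show ?thesis by linarith
qed

definition Phi :: "nat \<Rightarrow> real \<Rightarrow> nat \<Rightarrow> real" where "Phi n \<mu> k = exp (\<mu> * FF n k)"

lemma Phi_pos: "0 < Phi n \<mu> k" by (simp add: Phi_def)

lemma drift2:
  assumes n: "3 \<le> n" and mu: "0 \<le> \<mu>" "\<mu> \<le> 1/20" and i: "i \<le> n"
  shows "EE (Qn n i) (Phi n \<mu>) \<le> Phi n \<mu> i * (1 + 2 * \<mu> / (real n * (2 - rr n)) + 2000 * \<mu>\<^sup>2 / real n)"
proof (cases "i < n")
  case False
  then have "i = n" using i by simp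
  moreover have "0 \<le> 2 * \<mu> / (real n * (2 - rr n)) + 2000 * \<mu>\<^sup>2 / real n"
    using rr_bounds[OF n] mu by simp
  ultimately show ?thesis using Phi_pos[of n \<mu> n] by (simp add: E_Q_top)
next
  case True
  define P where "P = Phi n \<mu> i"
  define R where "R = rr n"
  define q :: real where "q = 10/7"
  define L where "L = lvl (Suc i) (n - i - 1)"
  have R: "1 < R" "R \<le> 3/2" using rr_bounds[OF n] by (auto simp: R_def)
  have P: "0 < P" by (simp add: P_def Phi_pos)
  have supp: "Suc i \<le> k \<and> k \<le> n" if "k \<in> set_pmf L" for k
    using set_lvl[of "Suc i" "n - i - 1"] that True by (auto simp: L_def)
  have pw: "Phi n \<mu> k \<le> P * (1 - \<mu> * FF n i) + (P * \<mu>) * FF n k + (P * 800 * \<mu>\<^sup>2 / q ^ i) * q ^ k"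
    if "k \<in> set_pmf L" for k
  proof -
    have k: "i \<le> k" "k \<le> n" using supp[OF that] by auto
    define d where "d = FF n k - FF n i"
    have d: "0 \<le> d" "d \<le> 3 * (real k - real i)"
      using FF_mono[OF n k(1)] FF_diff[OF n k] by (auto simp: d_def)
    have "Phi n \<mu> k = P * exp (\<mu> * d)"
      by (simp add: Phi_def P_def d_def algebra_simps flip: exp_add)
    also have "\<dots> \<le> P * (1 + \<mu> * d + 800 * \<mu>\<^sup>2 * (q ^ k / q ^ i))"
      using pointwise[OF mu d k(1)] P by (simp add: q_def)
    also have "\<dots> = P * (1 - \<mu> * FF n i) + (P * \<mu>) * FF n k + (P * 800 * \<mu>\<^sup>2 / q ^ i) * q ^ k"
      by (simp add: d_def algebra_simps)
    finally show ?thesis .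
  qed
  have fL: "finite (set_pmf L)" by (simp add: L_def finite_lvl)
  have EF: "EE L (FF n) \<le> FF n i + R ^ i + R ^ Suc i / (2 - R)"
    using E_lvl_F[of R "Suc i" "n - i - 1"] R by (simp add: L_def FF_def[abs_def] R_def FF_Suc)
  have Eq: "EE L (\<lambda>k. q ^ k) \<le> q ^ Suc i / (2 - q)"
    using E_lvl_geo[of q "Suc i" "n - i - 1"] by (simp add: L_def q_def)
  have "EE L (Phi n \<mu>) \<le> EE L (\<lambda>k. P * (1 - \<mu> * FF n i) + (P * \<mu>) * FF n k + (P * 800 * \<mu>\<^sup>2 / q ^ i) * q ^ k)"
    using pw fL by (intro E_mono) auto
  also have "\<dots> = P * (1 - \<mu> * FF n i) + (P * \<mu>) * EE L (FF n) + (P * 800 * \<mu>\<^sup>2 / q ^ i) * EE L (\<lambda>k. q ^ k)"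
    by (rule E_lin[OF fL])
  also have "\<dots> \<le> P * (1 - \<mu> * FF n i) + (P * \<mu>) * (FF n i + R ^ i + R ^ Suc i / (2 - R)) + (P * 800 * \<mu>\<^sup>2 / q ^ i) * (q ^ Suc i / (2 - q))"
    using EF Eq P mu by (intro add_mono mult_left_mono order.refl) (auto simp: q_def)
  also have "\<dots> = P * (1 + \<mu> * (R ^ i * (2 / (2 - R))) + 2000 * \<mu>\<^sup>2)"
    using R by (simp add: q_def field_simps)
  finally have EL: "EE L (Phi n \<mu>) \<le> P * (1 + \<mu> * (R ^ i * (2 / (2 - R))) + 2000 * \<mu>\<^sup>2)" .
  define A where "A = (1 - 1 / real n) ^ i"
  have A: "A * R ^ i = 1" "0 \<le> A" "A \<le> 1"
    using a_pow[OF n, of i] R a_pow_ge[OF n True] by (auto simp: A_def R_def intro: order.trans[OF _ a_pow_ge[OF n True]])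
  have "EE (Qn n i) (Phi n \<mu>) = P + A * (1 / real n) * (EE L (Phi n \<mu>) - P)"
    using E_Q[OF True, of "Phi n \<mu>"] by (simp add: A_def P_def L_def)
  also have "\<dots> \<le> P + A * (1 / real n) * (P * (\<mu> * (R ^ i * (2 / (2 - R))) + 2000 * \<mu>\<^sup>2))"
    using EL A n by (intro add_left_mono mult_left_mono) (auto simp: algebra_simps)
  also have "\<dots> = P * (1 + 2 * \<mu> / (real n * (2 - R)) + A * (2000 * \<mu>\<^sup>2 / real n))"
  proof -
    have "A * (1 / real n) * (P * (\<mu> * (R ^ i * (2 / (2 - R))))) = P * (2 * \<mu> / (real n * (2 - R))) * (A * R ^ i)"
      by (simp add: field_simps)
    then show ?thesis using A(1) by (simp add: algebra_simps)
  qed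
  also have "\<dots> \<le> P * (1 + 2 * \<mu> / (real n * (2 - R)) + 2000 * \<mu>\<^sup>2 / real n)"
  proof -
    have "A * (2000 * \<mu>\<^sup>2 / real n) \<le> 1 * (2000 * \<mu>\<^sup>2 / real n)"
      using A by (intro mult_right_mono) auto
    then show ?thesis using P by (intro mult_left_mono add_left_mono) auto
  qed
  finally show ?thesis by (simp add: P_def R_def)
qed



lemma finite_Qn: "i \<le> n \<Longrightarrow> finite (set_pmf (Qn n i))"
  by (meson finite_atLeastAtMost finite_subset set_Qn)

lemma E_Ln: "EE (LvChain n t) f = (\<Sum>i\<le>n. pmf (LvChain n t) i * f i)"
  by (rule E_fin) (auto simp: set_Ln)

lemma E_Ln_Suc: "EE (LvChain n (Suc t)) f = (\<Sum>i\<le>n. pmf (LvChain n t) i * EE (Qn n i) f)"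
  by (simp only: LvChain.simps, rule E_bind_fin) (auto simp: set_Ln finite_Qn)

lemma sum_Ln: "(\<Sum>i\<le>n. pmf (LvChain n t) i) = 1"
  by (rule sum_pmf_eq_1) (auto simp: set_Ln)

lemma chain1:
  assumes n: "3 \<le> n"
  shows "EE (LvChain n t) real + 2 / (exp 1 * real n) - EE (LvChain n t) (hh n) \<le> EE (LvChain n (Suc t)) real"
proof -
  have "EE (LvChain n t) real + 2 / (exp 1 * real n) - EE (LvChain n t) (hh n)
      = (\<Sum>i\<le>n. pmf (LvChain n t) i * (real i + 2 / (exp 1 * real n) - hh n i))"
  proof -
    have s: "(\<Sum>i\<le>n. pmf (LvChain n t) i * (2 / (exp 1 * real n))) = 2 / (exp 1 * real n)"
      using sum_Ln[of n t] by (simp only: flip: sum_distrib_right)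
    have "(\<Sum>i\<le>n. pmf (LvChain n t) i * (real i + 2 / (exp 1 * real n) - hh n i))
       = (\<Sum>i\<le>n. pmf (LvChain n t) i * real i) + (\<Sum>i\<le>n. pmf (LvChain n t) i * (2 / (exp 1 * real n)))
         - (\<Sum>i\<le>n. pmf (LvChain n t) i * hh n i)"
      by (simp add: sum_subtractf sum.distrib algebra_simps)
    then show ?thesis using s by (simp add: E_Ln[of n t])
  qed
  also have "\<dots> \<le> (\<Sum>i\<le>n. pmf (LvChain n t) i * EE (Qn n i) real)"
    using drift1[OF n] by (intro sum_mono mult_left_mono) auto
  also have "\<dots> = EE (LvChain n (Suc t)) real" by (rule E_Ln_Suc[symmetric])
  finally show ?thesis .
qed

lemma Phi_le_q: assumes n: "3 \<le> n" and mu: "0 \<le> \<mu>" "\<mu> \<le> 1/20" and k: "k \<le> n"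
  shows "Phi n \<mu> k \<le> (10/7) ^ k"
proof -
  have "\<mu> * FF n k \<le> (1/20) * (3 * real k)"
    using FF_le[OF n k] FF_nonneg[OF n, of k] mu by (intro mult_mono) auto
  then have "Phi n \<mu> k \<le> exp (real k * (3/20))" by (simp add: Phi_def)
  also have "\<dots> = exp (3/20) ^ k" by (rule exp_of_nat_mult)
  also have "\<dots> \<le> (10/7) ^ k" using exp_3_20 by (intro power_mono) auto
  finally show ?thesis .
qed

lemma chain2:
  assumes n: "3 \<le> n" and mu: "0 \<le> \<mu>" "\<mu> \<le> 1/20"
  defines "\<delta> \<equiv> 2 * \<mu> / (real n * (2 - rr n)) + 2000 * \<mu>\<^sup>2 / real n"
  shows "EE (LvChain n t) (Phi n \<mu>) \<le> 7/4 * (1 + \<delta>) ^ t"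
proof (induction t)
  case 0
  have "EE (lvl 0 n) (Phi n \<mu>) \<le> EE (lvl 0 n) (\<lambda>k. (10/7) ^ k)"
    using set_lvl[of 0 n] Phi_le_q[OF n mu] by (intro E_mono finite_lvl) auto
  also have "\<dots> \<le> (10/7) ^ 0 / (2 - 10/7)" by (rule E_lvl_geo) auto
  finally show ?case by simp
next
  case (Suc t)
  have d: "0 \<le> \<delta>" using rr_bounds[OF n] mu by (simp add: \<delta>_def)
  have "EE (LvChain n (Suc t)) (Phi n \<mu>) = (\<Sum>i\<le>n. pmf (LvChain n t) i * EE (Qn n i) (Phi n \<mu>))"
    by (rule E_Ln_Suc)
  also have "\<dots> \<le> (\<Sum>i\<le>n. pmf (LvChain n t) i * (Phi n \<mu> i * (1 + \<delta>)))"
    using drift2[OF n mu] by (intro sum_mono mult_left_mono) (auto simp: \<delta>_def add.assoc)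
  also have "\<dots> = (1 + \<delta>) * EE (LvChain n t) (Phi n \<mu>)"
    by (simp add: E_Ln[of n t] sum_distrib_left algebra_simps)
  also have "\<dots> \<le> (1 + \<delta>) * (7/4 * (1 + \<delta>) ^ t)"
    using Suc d by (intro mult_left_mono) auto
  finally show ?case by simp
qed

lemma hh_le: assumes n: "3 \<le> n" and mu: "0 \<le> \<mu>" "\<mu> \<le> 1/20" and i: "i \<le> n"
  shows "hh n i \<le> 2 / real n / Phi n \<mu> n * Phi n \<mu> i"
proof -
  have "\<mu> * (FF n n - FF n i) \<le> (1/20) * (3 * (real n - real i))"
    using FF_diff[OF n i order.refl] FF_mono[OF n i] mu by (intro mult_mono) auto
  then have "exp (real (n - i) * (3/20)) \<ge> exp (\<mu> * (FF n n - FF n i))"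
    using i by (simp add: of_nat_diff)
  moreover have "exp (real (n - i) * (3/20)) = exp (3/20) ^ (n - i)" by (rule exp_of_nat_mult)
  moreover have "exp (3/20 :: real) ^ (n - i) \<le> 2 ^ (n - i)"
    using exp_3_20 by (intro power_mono) auto
  ultimately have "exp (\<mu> * (FF n n - FF n i)) \<le> 2 ^ (n - i)" by linarith
  then have "(1/2) ^ (n - i) \<le> 1 / exp (\<mu> * (FF n n - FF n i))"
    by (simp add: power_one_over field_simps)
  also have "1 / exp (\<mu> * (FF n n - FF n i)) = Phi n \<mu> i / Phi n \<mu> n"
    by (simp add: Phi_def algebra_simps exp_diff)
  finally have "(1/2) ^ (n - i) \<le> Phi n \<mu> i / Phi n \<mu> n" .
  then show ?thesis using n by (simp add: hh_def divide_right_mono mult_left_mono field_simps)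
qed

lemma chain3:
  assumes n: "3 \<le> n" and mu: "0 \<le> \<mu>" "\<mu> \<le> 1/20"
  defines "\<delta> \<equiv> 2 * \<mu> / (real n * (2 - rr n)) + 2000 * \<mu>\<^sup>2 / real n"
  shows "EE (LvChain n t) (hh n) \<le> 2 / real n / Phi n \<mu> n * (7/4 * (1 + \<delta>) ^ t)"
proof -
  have "EE (LvChain n t) (hh n) \<le> EE (LvChain n t) (\<lambda>i. 2 / real n / Phi n \<mu> n * Phi n \<mu> i)"
    using set_Ln[of n t] hh_le[OF n mu] by (intro E_mono) (auto intro: finite_subset[OF set_Ln])
  also have "\<dots> = 2 / real n / Phi n \<mu> n * EE (LvChain n t) (Phi n \<mu>)"
    by (simp add: E_Ln[of n t] sum_distrib_left sum_divide_distrib algebra_simps)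
  also have "\<dots> \<le> 2 / real n / Phi n \<mu> n * (7/4 * (1 + \<delta>) ^ t)"
    using chain2[OF n mu] Phi_pos[of n \<mu> n] by (intro mult_left_mono) (auto simp: \<delta>_def)
  finally show ?thesis .
qed

lemma chain4:
  assumes n: "3 \<le> n"
  shows "2 * real t / (exp 1 * real n) - (\<Sum>s<t. EE (LvChain n s) (hh n)) \<le> EE (LvChain n t) real"
proof (induction t)
  case 0
  have "0 \<le> EE (LvChain n 0) real" by (simp add: E_Ln[of n 0] sum_nonneg)
  then show ?case by simp
next
  case (Suc t)
  have a: "(\<Sum>s<Suc t. EE (LvChain n s) (hh n)) = (\<Sum>s<t. EE (LvChain n s) (hh n)) + EE (LvChain n t) (hh n)"
    by (rule sum.lessThan_Suc)
  have b: "2 * real (Suc t) / (exp 1 * real n) = 2 * real t / (exp 1 * real n) + 2 / (exp 1 * real n)"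
    by (simp add: add_divide_distrib algebra_simps)
  show ?case using chain1[OF n, of t] Suc.IH unfolding a b by linarith
qed



lemma big_n:
  assumes n: "400 \<le> n"
    and t: "real t \<le> (exp 1 - 1) / 2 * real n ^ 2 - real n powr (3/2) * ln (real n)"
  shows "(\<Sum>s<t. EE (LvChain n s) (hh n)) \<le> 4 * exp 2002"
proof -
  have n3: "3 \<le> n" using n by simp
  have nr: "400 \<le> real n" using n by simp
  define s where "s = sqrt (real n)"
  have ss: "s * s = real n" by (simp add: s_def)
  have s20: "20 \<le> s"
  proof -
    have "sqrt 400 \<le> s" unfolding s_def using nr by (subst real_sqrt_le_iff) simp
    moreover have "sqrt (400::real) = 20" by (simp add: real_sqrt_eq_iff)
    ultimately show ?thesis by simp
  qed
  define \<mu> where "\<mu> = 1 / s"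
  have mu: "0 \<le> \<mu>" "\<mu> \<le> 1/20" using s20 by (auto simp: \<mu>_def field_simps)
  have mu2: "\<mu>\<^sup>2 = 1 / real n" by (simp add: \<mu>_def power2_eq_square ss[symmetric])
  define \<delta> where "\<delta> = 2 * \<mu> / (real n * (2 - rr n)) + 2000 * \<mu>\<^sup>2 / real n"
  have d0: "0 \<le> \<delta>" using rr_bounds[OF n3] mu by (simp add: \<delta>_def)
  have powr: "real n powr (3/2) = real n * s"
  proof -
    have "real n powr (3/2) = real n powr (1 + 1/2)" by simp
    also have "\<dots> = real n powr 1 * real n powr (1/2)" by (rule powr_add)
    finally show ?thesis using nr by (simp add: s_def powr_half_sqrt)
  qed
  have lnn: "0 \<le> ln (real n)" using nr by simp
  have tn2: "real t \<le> real n ^ 2"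
  proof -
    have "0 \<le> real n powr (3/2) * ln (real n)" using lnn by simp
    moreover have "(exp 1 - 1) / 2 * real n ^ 2 \<le> real n ^ 2" using mult_right_mono[OF exp_le, of "real n ^ 2"] by (simp add: field_simps)
    ultimately show ?thesis using t by linarith
  qed
  have t0: "0 \<le> real t" by simp
  have rr2: "1 / (2 - rr n) = 1 + 1 / (real n - 2)"
  proof -
    have "real n - 2 \<noteq> 0" "real n - 1 \<noteq> 0" using nr by auto
    then show ?thesis unfolding two_minus_rr[OF n3] by (simp add: field_simps)
  qed
  have dsplit: "real t * \<delta> = 2 * \<mu> * real t / real n + 2 * \<mu> * real t / (real n * (real n - 2)) + 2000 * real t / real n ^ 2"
  proof -
    have "2 * \<mu> / (real n * (2 - rr n)) = 2 * \<mu> / real n * (1 / (2 - rr n))" by simp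
    also have "\<dots> = 2 * \<mu> / real n + 2 * \<mu> / (real n * (real n - 2))" unfolding rr2 using nr by (simp add: field_simps)
    finally show ?thesis unfolding \<delta>_def mu2 by (simp add: field_simps power2_eq_square)
  qed
  have h1: "2 * \<mu> * real t / real n \<le> \<mu> * (exp 1 - 1) * real n - 2 * ln (real n)"
  proof -
    have "2 * \<mu> * real t / real n = (2 / (s * real n)) * real t" by (simp add: \<mu>_def)
    also have "\<dots> \<le> (2 / (s * real n)) * ((exp 1 - 1) / 2 * real n ^ 2 - real n * s * ln (real n))"
      using t s20 nr powr by (intro mult_left_mono) auto
    also have "\<dots> = \<mu> * (exp 1 - 1) * real n - 2 * ln (real n)"
      using s20 nr by (simp add: \<mu>_def field_simps power2_eq_square)
    finally show ?thesis .
  qed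
  have h2: "2 * \<mu> * real t / (real n * (real n - 2)) \<le> 1"
  proof -
    have "2 * \<mu> * real t / (real n * (real n - 2)) \<le> 2 * \<mu> * real n ^ 2 / (real n * (real n - 2))"
      using tn2 mu nr by (intro divide_right_mono mult_left_mono) auto
    also have "\<dots> = 2 * \<mu> * (real n / (real n - 2))" using nr by (simp add: field_simps power2_eq_square)
    also have "\<dots> \<le> 2 * (1/20) * 2"
      using mu nr by (intro mult_mono) (auto simp: field_simps)
    finally show ?thesis by simp
  qed
  have h3: "2000 * real t / real n ^ 2 \<le> 2000" using tn2 nr by (simp add: field_simps)
  have h4: "\<mu> * ((real n - 1) * (exp 1 - 1)) \<le> \<mu> * FF n n"
    using FF_n[OF n3] mu by (intro mult_left_mono) auto
  have h5: "\<mu> * (exp 1 - 1) \<le> 1"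
  proof -
    have "\<mu> * (exp 1 - 1) \<le> (1/20) * 2" using mu exp_le by (intro mult_mono) auto
    then show ?thesis by simp
  qed
  have key: "real t * \<delta> - \<mu> * FF n n \<le> 2002 - 2 * ln (real n)"
  proof -
    have "\<mu> * (exp 1 - 1) * real n - \<mu> * ((real n - 1) * (exp 1 - 1)) = \<mu> * (exp 1 - 1)"
      by (simp add: algebra_simps)
    then show ?thesis using dsplit h1 h2 h3 h4 h5 by linarith
  qed
  have each: "EE (LvChain n s') (hh n) \<le> 2 / real n / Phi n \<mu> n * (7/4 * (1 + \<delta>) ^ t)" if "s' < t" for s'
  proof -
    have "EE (LvChain n s') (hh n) \<le> 2 / real n / Phi n \<mu> n * (7/4 * (1 + \<delta>) ^ s')"
      using chain3[OF n3 mu, of s'] by (simp add: \<delta>_def)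
    also have "\<dots> \<le> 2 / real n / Phi n \<mu> n * (7/4 * (1 + \<delta>) ^ t)"
      using that d0 Phi_pos[of n \<mu> n] by (intro mult_left_mono power_increasing) auto
    finally show ?thesis .
  qed
  have "(\<Sum>s<t. EE (LvChain n s) (hh n)) \<le> real t * (2 / real n / Phi n \<mu> n * (7/4 * (1 + \<delta>) ^ t))"
    using sum_mono[of "{..<t}" "\<lambda>s. EE (LvChain n s) (hh n)" "\<lambda>_. 2 / real n / Phi n \<mu> n * (7/4 * (1 + \<delta>) ^ t)"] each
    by simp
  also have "\<dots> \<le> real t * (2 / real n / Phi n \<mu> n * (7/4 * exp (real t * \<delta>)))"
  proof -
    have "(1 + \<delta>) ^ t \<le> exp \<delta> ^ t" using d0 by (intro power_mono) auto
    also have "\<dots> = exp (real t * \<delta>)" by (simp add: exp_of_nat_mult)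
    finally show ?thesis using Phi_pos[of n \<mu> n] nr by (intro mult_left_mono) auto
  qed
  also have "\<dots> = 7 / 2 * real t / real n * exp (real t * \<delta> - \<mu> * FF n n)"
    by (simp add: Phi_def exp_diff field_simps)
  also have "\<dots> \<le> 7 / 2 * real t / real n * exp (2002 - 2 * ln (real n))"
    using key nr by (intro mult_left_mono) auto
  also have "exp (2002 - 2 * ln (real n)) = exp 2002 / real n ^ 2"
  proof -
    have "exp (2 * ln (real n)) = exp (ln (real n)) ^ 2"
      using exp_of_nat_mult[of 2 "ln (real n)"] by simp
    also have "\<dots> = real n ^ 2" using nr by simp
    finally show ?thesis by (simp add: exp_diff)
  qed
  also have "7 / 2 * real t / real n * (exp 2002 / real n ^ 2) \<le> 7 / 2 * real n ^ 2 / real n * (exp 2002 / real n ^ 2)"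
    using tn2 nr by (intro mult_right_mono divide_right_mono mult_left_mono) auto
  also have "\<dots> = 7 / 2 * exp 2002 / real n" using nr by (simp add: field_simps power2_eq_square)
  also have "\<dots> \<le> 4 * exp 2002" using nr by (simp add: field_simps)
  finally show ?thesis .
qed

theorem theorem11:
  shows "\<exists>C::real. \<forall>(n::nat) (t::nat). n \<ge> 1 \<longrightarrow>
     real t \<le> (exp 1 - 1) / 2 * real n ^ 2 - real n powr (3/2) * ln (real n) \<longrightarrow>
     expected_LO n t \<ge> 2 * real t / (exp 1 * real n) - C"
proof (intro exI allI impI)
  fix n t :: nat
  assume n1: "n \<ge> 1"
    and t: "real t \<le> (exp 1 - 1) / 2 * real n ^ 2 - real n powr (3/2) * ln (real n)"
  have E: "expected_LO n t = EE (LvChain n t) real" by (rule expected_LO_Ln[OF n1])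
  show "2 * real t / (exp 1 * real n) - (4 * exp 2002 + 800) \<le> expected_LO n t"
  proof (cases "400 \<le> n")
    case True
    have "2 * real t / (exp 1 * real n) - (\<Sum>s<t. EE (LvChain n s) (hh n)) \<le> EE (LvChain n t) real"
      using chain4[of n t] True by simp
    moreover have "(\<Sum>s<t. EE (LvChain n s) (hh n)) \<le> 4 * exp 2002" by (rule big_n[OF True t])
    ultimately show ?thesis using E by simp
  next
    case False
    have nr: "1 \<le> real n" "real n < 400" using n1 False by auto
    have E0: "0 \<le> EE (LvChain n t) real" by (simp add: E_Ln sum_nonneg)
    have tn2: "real t \<le> real n ^ 2"
    proof -
      have "0 \<le> real n powr (3/2) * ln (real n)" using nr by simp
      moreover have "(exp 1 - 1) / 2 * real n ^ 2 \<le> real n ^ 2" using mult_right_mono[OF exp_le, of "real n ^ 2"] by (simp add: field_simps)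
      ultimately show ?thesis using t by linarith
    qed
    have "2 * real t / (exp 1 * real n) \<le> 2 * real n ^ 2 / (1 * real n)"
      using tn2 nr by (intro frac_le mult_right_mono) (auto simp: order.trans[OF _ exp_ge_add_one_self])
    also have "\<dots> = 2 * real n" using nr by (simp add: power2_eq_square)
    also have "\<dots> \<le> 800" using nr by simp
    finally have "2 * real t / (exp 1 * real n) \<le> 800" .
    moreover have "0 \<le> exp (2002::real)" by simp
    ultimately show ?thesis using E E0 by linarith
  qed
qed

end
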